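(* Let $T$ be an $r$-interval exchange transformation of $[0,1)$ with $\omega(T)=\omega_0$. Then $C_\psi(T)\le\tau(T)\le(r-1)\,\omega_0$. In particular, if $\omega(T)=0$ then $\tau(T)=C_\psi(T)=0$.
   Context: An $r$-interval exchange transformation is given by a permutation $\pi$ of $\{1,\dots,r\}$ and lengths $\ell_i>0$ with $\sum\ell_i=1$: with $s_0=0$, $s_k=\sum_{i\le k}\ell_i$, $I_k=[s_{k-1},s_k)$, $T(x)=x-\sum_{i<k}\ell_i+\sum_{\pi(i')<\pi(k)}\ell_{i'}$ for $x\in I_k$. Let $\oplus,\ominus$ be addition/subtraction mod $1$. $\Delta(T)=\{T(x)\ominus x\}$, $\Delta'(T)=\{u\ominus v:u,v\in\Delta(T)\}$, $\Delta'_n(T)=\bigcup_{k=1}^n\Delta'(T^k)$, $\tau(T)=\limsup_n\frac{\log\operatorname{card}\Delta'_n(T)}{\log n}$. For $n\in\mathbb N$, $D_n(T)=\sup_{x\in[0,1),\,0<a<b<1}\big|\frac1n\sum_{k=0}^{n-1}\theta_{a,b}(T^kx)-(b-a)\big|$, where $\theta_{a,b}$ is the indicator of $(a,b)$, and $\omega(T)=\limsup_{n\to\infty}\frac{\log(nD_n(T))}{\log n}$. With $\lambda$ Lebesgue measure and $\|t\|$ the distance from $t$ to the nearest integer, $C_\psi(T)=\sup\big(\{0\}\cup\{\alpha>0:\liminf_n n^\alpha\|T^nx-T^ny\|=0\text{ for }\lambda\times\lambda\text{-a.e. }(x,y)\}\big)$. *)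

theory Defs
  imports "HOL-Analysis.Analysis" "HOL-Probability.Probability" "HOL-Combinatorics.Permutations"
begin

definition iet_s :: "(nat \<Rightarrow> real) \<Rightarrow> nat \<Rightarrow> real" where
  "iet_s l k = (\<Sum>i\<in>{1..k}. l i)"

definition iet :: "nat \<Rightarrow> (nat \<Rightarrow> nat) \<Rightarrow> (nat \<Rightarrow> real) \<Rightarrow> real \<Rightarrow> real" where
  "iet r \<pi> l x =
     (let k = (THE k. k \<in> {1..r} \<and> iet_s l (k - 1) \<le> x \<and> x < iet_s l k)
      in x - (\<Sum>i\<in>{1..<k}. l i) + (\<Sum>i\<in>{i\<in>{1..r}. \<pi> i < \<pi> k}. l i))"

definition is_iet_data :: "nat \<Rightarrow> (nat \<Rightarrow> nat) \<Rightarrow> (nat \<Rightarrow> real) \<Rightarrow> bool" where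
  "is_iet_data r \<pi> l \<longleftrightarrow> r \<ge> 1 \<and> \<pi> permutes {1..r} \<and> (\<forall>i\<in>{1..r}. l i > 0)
      \<and> (\<Sum>i\<in>{1..r}. l i) = 1"

definition msub :: "real \<Rightarrow> real \<Rightarrow> real" (infixl "\<ominus>" 65) where
  "u \<ominus> v = frac (u - v)"

definition dnint :: "real \<Rightarrow> real" where
  "dnint t = \<bar>t - of_int (round t)\<bar>"

definition Delta :: "(real \<Rightarrow> real) \<Rightarrow> real set" where
  "Delta T = {T x \<ominus> x | x. x \<in> {0..<1}}"

definition Delta' :: "(real \<Rightarrow> real) \<Rightarrow> real set" where
  "Delta' T = {u \<ominus> v | u v. u \<in> Delta T \<and> v \<in> Delta T}"

definition Delta'_n :: "(real \<Rightarrow> real) \<Rightarrow> nat \<Rightarrow> real set" where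
  "Delta'_n T n = (\<Union>k\<in>{1..n}. Delta' (T ^^ k))"

definition tau :: "(real \<Rightarrow> real) \<Rightarrow> ereal" where
  "tau T = limsup (\<lambda>n. ereal (ln (real (card (Delta'_n T n))) / ln (real n)))"

definition discr :: "(real \<Rightarrow> real) \<Rightarrow> nat \<Rightarrow> real" where
  "discr T n = (SUP (x, a, b) \<in> {(x, a, b). x \<in> {0..<1} \<and> 0 < a \<and> a < b \<and> b < 1}.
      \<bar>(1 / real n) * (\<Sum>k<n. indicator {a<..<b} ((T ^^ k) x)) - (b - a)\<bar>)"

definition omega :: "(real \<Rightarrow> real) \<Rightarrow> ereal" where
  "omega T = limsup (\<lambda>n. ereal (ln (real n * discr T n) / ln (real n)))"

definition unit_leb :: "real measure" where
  "unit_leb = restrict_space lborel {0..<1}"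

definition C_psi :: "(real \<Rightarrow> real) \<Rightarrow> ereal" where
  "C_psi T = Sup ({0} \<union> {ereal \<alpha> | \<alpha>. \<alpha> > 0 \<and>
      (AE p in unit_leb \<Otimes>\<^sub>M unit_leb.
         liminf (\<lambda>n. ereal (real n powr \<alpha> * dnint ((T ^^ n) (fst p) - (T ^^ n) (snd p)))) = 0)})"

end

theory Submission
  imports Defs
begin


lemma frac_frac_diff: "frac (frac a - frac b) = frac (a - b)"
proof -
  have "frac a - frac b = (a - b) + of_int (\<lfloor>b\<rfloor> - \<lfloor>a\<rfloor>)" by (simp add: frac_def)
  then show ?thesis by (simp only: frac_add_of_int_right)
qed

context fixes r \<pi> l assumes iet: "is_iet_data r \<pi> l"
begin

lemma r_ge1: "r \<ge> 1" using iet by (simp add: is_iet_data_def)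
lemma l_pos: "i \<in> {1..r} \<Longrightarrow> l i > 0" using iet by (simp add: is_iet_data_def)
lemma l_sum: "(\<Sum>i\<in>{1..r}. l i) = 1" using iet by (simp add: is_iet_data_def)

lemma s_0: "iet_s l 0 = 0" by (simp add: iet_s_def)
lemma s_Suc: "iet_s l (Suc k) = iet_s l k + l (Suc k)"
  by (simp add: iet_s_def add.commute)
lemma s_r: "iet_s l r = 1" using l_sum by (simp add: iet_s_def)

lemma s_strict: "i < j \<Longrightarrow> j \<le> r \<Longrightarrow> iet_s l i < iet_s l j"
proof (induction j)
  case 0 then show ?case by simp
next
  case (Suc j)
  have "l (Suc j) > 0" using Suc.prems by (intro l_pos) auto
  then show ?case using Suc by (cases "i = j") (auto simp: s_Suc)
qed

lemma s_mono: "i \<le> j \<Longrightarrow> j \<le> r \<Longrightarrow> iet_s l i \<le> iet_s l j"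
  using s_strict by (cases "i = j") (auto simp: order.strict_implies_order)

lemma s_minus: "k \<ge> 1 \<Longrightarrow> iet_s l k - iet_s l (k - 1) = l k"
  using s_Suc[of "k - 1"] by simp

lemma s_sum: "k \<ge> 1 \<Longrightarrow> (\<Sum>i\<in>{1..<k}. l i) = iet_s l (k - 1)"
  unfolding iet_s_def by (rule sum.cong) auto

lemma idx_ex1: assumes "x \<in> {0..<1}"
  shows "\<exists>!k. k \<in> {1..r} \<and> iet_s l (k - 1) \<le> x \<and> x < iet_s l k"
proof -
  have "x < iet_s l r" using assms s_r by simp
  then have ex: "\<exists>k. x < iet_s l k" by blast
  define k where "k = (LEAST k. x < iet_s l k)"
  have k1: "x < iet_s l k" unfolding k_def by (rule LeastI_ex[OF ex])
  have kr: "k \<le> r" unfolding k_def using assms s_r by (intro Least_le) auto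
  have k0: "k \<noteq> 0"
  proof
    assume "k = 0" then show False using k1 assms s_0 by simp
  qed
  have k2: "iet_s l (k - 1) \<le> x"
  proof -
    have "\<not> x < iet_s l (k - 1)" unfolding k_def
      by (rule not_less_Least) (use k0 in \<open>simp add: k_def\<close>)
    then show ?thesis by simp
  qed
  show ?thesis
  proof (rule ex1I[of _ k])
    show "k \<in> {1..r} \<and> iet_s l (k - 1) \<le> x \<and> x < iet_s l k" using k0 kr k1 k2 by auto
  next
    fix k' assume h: "k' \<in> {1..r} \<and> iet_s l (k' - 1) \<le> x \<and> x < iet_s l k'"
    show "k' = k"
    proof (rule ccontr)
      assume ne: "k' \<noteq> k"
      show False
      proof (cases "k' < k")
        case True
        then have "iet_s l k' \<le> iet_s l (k - 1)" using kr by (intro s_mono) auto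
        then show False using h k2 by auto
      next
        case False
        then have "iet_s l k \<le> iet_s l (k' - 1)" using ne h by (intro s_mono) auto
        then show False using h k1 by auto
      qed
    qed
  qed
qed

definition idx :: "real \<Rightarrow> nat" where
  "idx x = (THE k. k \<in> {1..r} \<and> iet_s l (k - 1) \<le> x \<and> x < iet_s l k)"

lemma idx: assumes "x \<in> {0..<1}"
  shows "idx x \<in> {1..r}" "iet_s l (idx x - 1) \<le> x" "x < iet_s l (idx x)"
  using theI'[OF idx_ex1[OF assms]] unfolding idx_def by auto

lemma idx_eq: assumes "x \<in> {0..<1}" "j \<in> {1..r}"
  shows "idx x = j \<longleftrightarrow> x \<in> {iet_s l (j - 1)..<iet_s l j}"
  using idx[OF assms(1)] idx_ex1[OF assms(1)] assms(2) by auto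

definition tr :: "nat \<Rightarrow> real" where
  "tr k = (\<Sum>i\<in>{i\<in>{1..r}. \<pi> i < \<pi> k}. l i) - (\<Sum>i\<in>{1..<k}. l i)"

lemma iet_eq: "x \<in> {0..<1} \<Longrightarrow> iet r \<pi> l x = x + tr (idx x)"
  unfolding iet_def tr_def idx_def[symmetric] Let_def by simp

lemma iet_in: assumes "x \<in> {0..<1}" shows "iet r \<pi> l x \<in> {0..<1}"
proof -
  define k where "k = idx x"
  have k: "k \<in> {1..r}" "iet_s l (k - 1) \<le> x" "x < iet_s l k" using idx[OF assms] k_def by auto
  have lk: "iet_s l k = iet_s l (k - 1) + l k" using s_minus[of k] k by simp
  define A where "A = (\<Sum>i\<in>{i\<in>{1..r}. \<pi> i < \<pi> k}. l i)"
  have A0: "A \<ge> 0" unfolding A_def by (intro sum_nonneg) (simp add: less_imp_le l_pos)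
  have "A + l k = (\<Sum>i\<in>insert k {i\<in>{1..r}. \<pi> i < \<pi> k}. l i)"
    unfolding A_def by (subst sum.insert) auto
  also have "\<dots> \<le> (\<Sum>i\<in>{1..r}. l i)"
    using k by (intro sum_mono2) (auto simp: less_imp_le l_pos)
  finally have A1: "A + l k \<le> 1" using l_sum by simp
  have ss: "(\<Sum>i\<in>{1..<k}. l i) = iet_s l (k - 1)" using k by (intro s_sum) auto
  have "iet r \<pi> l x = x - iet_s l (k - 1) + A"
    using iet_eq[OF assms] ss by (simp add: tr_def A_def k_def)
  then show ?thesis using k lk A0 A1 by auto
qed

lemma iet_pow_in: "x \<in> {0..<1} \<Longrightarrow> (iet r \<pi> l ^^ m) x \<in> {0..<1}"
  by (induction m) (auto intro: iet_in simp del: atLeastLessThan_iff)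

lemma iet_pow_eq: "x \<in> {0..<1} \<Longrightarrow>
   (iet r \<pi> l ^^ k) x = x + (\<Sum>m<k. tr (idx ((iet r \<pi> l ^^ m) x)))"
proof (induction k)
  case 0 then show ?case by simp
next
  case (Suc k)
  then show ?case using iet_eq[OF iet_pow_in[OF Suc.prems, of k]] by simp
qed

definition cnt :: "nat \<Rightarrow> real \<Rightarrow> nat \<Rightarrow> nat" where
  "cnt j x k = (\<Sum>m<k. if idx ((iet r \<pi> l ^^ m) x) = j then 1 else 0)"

lemma cnt_sum: assumes "x \<in> {0..<1}" shows "(\<Sum>j\<in>{1..r}. cnt j x k) = k"
proof -
  have "(\<Sum>j\<in>{1..r}. cnt j x k) = (\<Sum>m<k. \<Sum>j\<in>{1..r}. if idx ((iet r \<pi> l ^^ m) x) = j then 1 else 0)"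
    unfolding cnt_def by (rule sum.swap)
  also have "\<dots> = (\<Sum>m<k. 1)"
  proof (rule sum.cong[OF refl])
    fix m assume "m \<in> {..<k}"
    have "idx ((iet r \<pi> l ^^ m) x) \<in> {1..r}" using idx(1)[OF iet_pow_in[OF assms]] .
    then show "(\<Sum>j\<in>{1..r}. if idx ((iet r \<pi> l ^^ m) x) = j then 1 else 0) = (1::nat)"
      by (simp add: sum.delta)
  qed
  finally show ?thesis by simp
qed

lemma iet_pow_cnt: assumes "x \<in> {0..<1}"
  shows "(iet r \<pi> l ^^ k) x - x = (\<Sum>j\<in>{1..r}. real (cnt j x k) * tr j)"
proof -
  have "(iet r \<pi> l ^^ k) x - x = (\<Sum>m<k. tr (idx ((iet r \<pi> l ^^ m) x)))"
    using iet_pow_eq[OF assms, of k] by linarith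
  also have "\<dots> = (\<Sum>m<k. \<Sum>j\<in>{1..r}. if idx ((iet r \<pi> l ^^ m) x) = j then tr j else 0)"
  proof (rule sum.cong[OF refl])
    fix m assume "m \<in> {..<k}"
    have "idx ((iet r \<pi> l ^^ m) x) \<in> {1..r}" using idx(1)[OF iet_pow_in[OF assms]] .
    then show "tr (idx ((iet r \<pi> l ^^ m) x)) = (\<Sum>j\<in>{1..r}. if idx ((iet r \<pi> l ^^ m) x) = j then tr j else 0)"
      by (simp add: sum.delta)
  qed
  also have "\<dots> = (\<Sum>j\<in>{1..r}. \<Sum>m<k. if idx ((iet r \<pi> l ^^ m) x) = j then tr j else 0)"
    by (rule sum.swap)
  also have "\<dots> = (\<Sum>j\<in>{1..r}. real (cnt j x k) * tr j)"
  proof (rule sum.cong[OF refl])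
    fix j
    have "(\<Sum>m<k. if idx ((iet r \<pi> l ^^ m) x) = j then tr j else 0) =
          (\<Sum>m<k. (if idx ((iet r \<pi> l ^^ m) x) = j then 1 else 0 :: real) * tr j)"
      by (rule sum.cong) auto
    also have "\<dots> = (\<Sum>m<k. (if idx ((iet r \<pi> l ^^ m) x) = j then 1 else 0 :: real)) * tr j"
      by (rule sum_distrib_right[symmetric])
    also have "(\<Sum>m<k. (if idx ((iet r \<pi> l ^^ m) x) = j then 1 else 0 :: real)) = real (cnt j x k)"
      unfolding cnt_def of_nat_sum by (rule sum.cong) auto
    finally show "(\<Sum>m<k. if idx ((iet r \<pi> l ^^ m) x) = j then tr j else 0) = real (cnt j x k) * tr j" .
  qed
  finally show ?thesis .
qed

lemma cnt_ind: assumes "x \<in> {0..<1}" "j \<in> {1..r}"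
  shows "real (cnt j x k) = (\<Sum>m<k. indicator {iet_s l (j - 1)..<iet_s l j} ((iet r \<pi> l ^^ m) x))"
  unfolding cnt_def of_nat_sum
  by (intro sum.cong refl) (simp add: idx_eq[OF iet_pow_in[OF assms(1)] assms(2)] indicator_def)

end


lemma avg_bound:
  fixes S :: "real set" and f :: "nat \<Rightarrow> real"
  shows "0 \<le> (1/real n) * (\<Sum>k<n. indicator S (f k)) \<and> (1/real n) * (\<Sum>k<n. indicator S (f k)) \<le> (1::real)"
proof (cases "n = 0")
  case True then show ?thesis by simp
next
  case False
  have s0: "0 \<le> (\<Sum>k<n. indicator S (f k) :: real)" by (intro sum_nonneg) (simp add: indicator_def)
  have "(\<Sum>k<n. indicator S (f k) :: real) \<le> (\<Sum>k<n. 1)" by (intro sum_mono) (simp add: indicator_def)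
  then have "(\<Sum>k<n. indicator S (f k) :: real) \<le> real n" by simp
  then show ?thesis using s0 False by (simp add: field_simps)
qed

lemma discr_ge:
  fixes T :: "real \<Rightarrow> real"
  assumes "x \<in> {0..<1}" "0 < a" "a < b" "b < 1"
  shows "\<bar>(1 / real n) * (\<Sum>k<n. indicator {a<..<b} ((T ^^ k) x)) - (b - a)\<bar> \<le> discr T n"
  unfolding discr_def
proof (rule cSUP_upper2[where x="(x,a,b)"])
  show "(x, a, b) \<in> {(x, a, b). x \<in> {0..<1} \<and> 0 < a \<and> a < b \<and> b < 1}" using assms by auto
  show "bdd_above ((\<lambda>(x, a, b). \<bar>1 / real n * (\<Sum>k<n. indicator {a<..<b} ((T ^^ k) x)) - (b - a)\<bar>) `
      {(x, a, b). x \<in> {0..<1} \<and> 0 < a \<and> a < b \<and> b < 1})"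
  proof (rule bdd_aboveI[where M=2], clarify)
    fix x a b :: real assume h: "x \<in> {0..<1}" "0 < a" "a < b" "b < 1"
    have "0 \<le> (1/real n) * (\<Sum>k<n. indicator {a<..<b} ((T ^^ k) x)) \<and> (1/real n) * (\<Sum>k<n. indicator {a<..<b} ((T ^^ k) x)) \<le> (1::real)"
      by (rule avg_bound)
    then show "\<bar>1 / real n * (\<Sum>k<n. indicator {a<..<b} ((T ^^ k) x)) - (b - a)\<bar> \<le> 2"
      using h by (auto simp: abs_le_iff)
  qed
qed simp

lemma discr_nonneg: fixes T :: "real \<Rightarrow> real" shows "discr T n \<ge> 0"
  using discr_ge[where x="1/2" and a="1/4" and b="3/4" and T=T and n=n] by simp

lemma discr_ge_inv:
  fixes T :: "real \<Rightarrow> real"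
  assumes "n \<ge> 1" shows "discr T n \<ge> 1 / real n"
proof (rule ccontr)
  assume "\<not> ?thesis"
  then have lt: "discr T n < 1 / real n" by simp
  define \<eta> where "\<eta> = min (1/8) ((1 / real n - discr T n) / 4)"
  have e1: "\<eta> > 0" using lt by (simp add: \<eta>_def)
  have e2: "\<eta> \<le> 1/8" unfolding \<eta>_def by (rule min.cobounded1)
  have e3: "\<eta> \<le> (1 / real n - discr T n) / 4" unfolding \<eta>_def by (rule min.cobounded2)
  note eta = e1 e2 e3
  define S where "S = (\<Sum>k<n. indicator {1/2-\<eta><..<1/2+\<eta>} ((T ^^ k) (1/2)) :: real)"
  have "indicator {1/2-\<eta><..<1/2+\<eta>} ((T ^^ 0) (1/2)) \<le> S"
    unfolding S_def using assms by (intro member_le_sum) (auto simp: indicator_def)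
  then have S1: "S \<ge> 1" using eta by (simp add: indicator_def)
  have "\<bar>(1 / real n) * S - ((1/2+\<eta>) - (1/2-\<eta>))\<bar> \<le> discr T n"
    unfolding S_def using eta by (intro discr_ge) auto
  moreover have "(1 / real n) * S \<ge> 1 / real n" using S1 assms by (simp add: field_simps)
  ultimately show False using eta by (auto simp: abs_le_iff)
qed

lemma cnt_low:
  fixes T :: "real \<Rightarrow> real"
  assumes "x \<in> {0..<1}" "n \<ge> 1" "0 \<le> c" "c \<le> d" "d \<le> 1"
  shows "(\<Sum>k<n. indicator {c..<d} ((T ^^ k) x)) \<ge> real n * (d - c) - real n * discr T n"
proof (cases "c = d")
  case True
  have "0 \<le> (\<Sum>k<n. indicator {c..<d} ((T ^^ k) x) :: real)" by (intro sum_nonneg) (simp add: indicator_def)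
  then show ?thesis using True discr_nonneg[of T n] by simp
next
  case False
  show ?thesis
  proof (rule field_le_epsilon)
    fix e :: real assume e: "e > 0"
    define \<epsilon> where "\<epsilon> = min (e / (2 * real n)) ((d - c) / 4)"
    have ep1: "\<epsilon> > 0" using e False assms by (simp add: \<epsilon>_def)
    have ep2: "\<epsilon> \<le> e / (2 * real n)" unfolding \<epsilon>_def by (rule min.cobounded1)
    have ep3: "\<epsilon> \<le> (d - c) / 4" unfolding \<epsilon>_def by (rule min.cobounded2)
    note ep = ep1 ep2 ep3
    define S where "S = (\<Sum>k<n. indicator {c+\<epsilon><..<d-\<epsilon>} ((T ^^ k) x) :: real)"
    have "\<bar>(1 / real n) * S - ((d-\<epsilon>) - (c+\<epsilon>))\<bar> \<le> discr T n"
      unfolding S_def using ep assms False by (intro discr_ge) auto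
    then have "(1 / real n) * S \<ge> (d - c - 2*\<epsilon>) - discr T n" by (auto simp: abs_le_iff)
    then have "S \<ge> real n * (d - c - 2*\<epsilon>) - real n * discr T n"
      using assms by (simp add: field_simps)
    moreover have "real n * (2*\<epsilon>) \<le> e" using ep assms by (simp add: field_simps)
    moreover have "S \<le> (\<Sum>k<n. indicator {c..<d} ((T ^^ k) x))"
      unfolding S_def using ep by (intro sum_mono) (auto simp: indicator_def)
    ultimately show "real n * (d - c) - real n * discr T n \<le> (\<Sum>k<n. indicator {c..<d} ((T ^^ k) x)) + e"
      by (simp add: algebra_simps)
  qed
qed

lemma orbit_in:
  fixes T :: "real \<Rightarrow> real"
  assumes "\<And>z. z \<in> {0..<1} \<Longrightarrow> T z \<in> {0..<1}" "x \<in> {0..<1}"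
  shows "(T ^^ k) x \<in> {0..<1}"
  using assms by (induction k) (auto simp del: atLeastLessThan_iff)

lemma cnt_two:
  fixes T :: "real \<Rightarrow> real"
  assumes Tin: "\<And>z. z \<in> {0..<1} \<Longrightarrow> T z \<in> {0..<1}"
    and "x \<in> {0..<1}" "n \<ge> 1" "0 \<le> c" "c \<le> d" "d \<le> 1"
  shows "\<bar>(\<Sum>k<n. indicator {c..<d} ((T ^^ k) x)) - real n * (d - c)\<bar> \<le> 2 * real n * discr T n"
proof -
  have low: "(\<Sum>k<n. indicator {c..<d} ((T ^^ k) x)) \<ge> real n * (d - c) - real n * discr T n"
    using assms(2-6) by (intro cnt_low) auto
  have l1: "(\<Sum>k<n. indicator {0..<c} ((T ^^ k) x)) \<ge> real n * (c - 0) - real n * discr T n"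
    using assms(2-6) by (intro cnt_low) auto
  have l2: "(\<Sum>k<n. indicator {d..<1} ((T ^^ k) x)) \<ge> real n * (1 - d) - real n * discr T n"
    using assms(2-6) by (intro cnt_low) auto
  have "(\<Sum>k<n. indicator {c..<d} ((T ^^ k) x)) =
     (\<Sum>k<n. 1 - indicator {0..<c} ((T ^^ k) x) - indicator {d..<1} ((T ^^ k) x) :: real)"
  proof (rule sum.cong[OF refl])
    fix k assume "k \<in> {..<n}"
    have "(T ^^ k) x \<in> {0..<1}" by (rule orbit_in[OF Tin assms(2)])
    then show "indicator {c..<d} ((T ^^ k) x) = (1 - indicator {0..<c} ((T ^^ k) x) - indicator {d..<1} ((T ^^ k) x) :: real)"
      using assms(4-6) by (auto simp: indicator_def)
  qed
  also have "\<dots> = real n - (\<Sum>k<n. indicator {0..<c} ((T ^^ k) x)) - (\<Sum>k<n. indicator {d..<1} ((T ^^ k) x))"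
    by (simp add: sum_subtractf)
  finally have up: "(\<Sum>k<n. indicator {c..<d} ((T ^^ k) x)) = real n - (\<Sum>k<n. indicator {0..<c} ((T ^^ k) x)) - (\<Sum>k<n. indicator {d..<1} ((T ^^ k) x))" .
  show ?thesis using low l1 l2 up by (auto simp: abs_le_iff algebra_simps)
qed



lemma round_add_int: fixes t :: real shows "round (t + of_int i) = round t + i"
proof -
  have "round (t + of_int i) = \<lfloor>(t + 1/2) + of_int i\<rfloor>" by (simp add: round_def algebra_simps)
  also have "\<dots> = \<lfloor>t + 1/2\<rfloor> + i" by (rule floor_add_int[symmetric])
  finally show ?thesis by (simp add: round_def)
qed

lemma dnint_add_int: "dnint (t + of_int i) = dnint t"
  by (simp add: dnint_def round_add_int)

lemma dnint_le: "dnint t \<le> \<bar>t - of_int m\<bar>"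
  unfolding dnint_def by (rule round_diff_minimal)

lemma dnint_orbit:
  fixes T :: "real \<Rightarrow> real"
  assumes "x \<in> {0..<1}" "y \<in> {0..<1}"
  shows "\<exists>\<delta>\<in>Delta' (T ^^ n). dnint ((T ^^ n) x - (T ^^ n) y) = dnint (x - y + \<delta>)"
proof -
  define a where "a = (T ^^ n) x - x"
  define b where "b = (T ^^ n) y - y"
  define \<delta> where "\<delta> = ((T ^^ n) x \<ominus> x) \<ominus> ((T ^^ n) y \<ominus> y)"
  have d: "\<delta> \<in> Delta' (T ^^ n)" unfolding \<delta>_def Delta'_def Delta_def using assms by blast
  have "\<delta> = frac (a - b)" unfolding \<delta>_def msub_def a_def b_def by (rule frac_frac_diff)
  then have "\<delta> = (a - b) + of_int (- \<lfloor>a - b\<rfloor>)" by (simp add: frac_def)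
  then have "x - y + \<delta> = ((T ^^ n) x - (T ^^ n) y) + of_int (- \<lfloor>a - b\<rfloor>)"
    by (simp add: a_def b_def)
  then have "dnint (x - y + \<delta>) = dnint ((T ^^ n) x - (T ^^ n) y)" by (simp only: dnint_add_int)
  then show ?thesis using d by metis
qed

lemma Delta'_n_zero: "n \<ge> 1 \<Longrightarrow> (0::real) \<in> Delta'_n T n"
proof -
  assume n: "n \<ge> 1"
  have "(T ^^ 1) 0 \<ominus> 0 \<in> Delta (T ^^ 1)" unfolding Delta_def by auto
  then have "((T ^^ 1) 0 \<ominus> 0) \<ominus> ((T ^^ 1) 0 \<ominus> 0) \<in> Delta' (T ^^ 1)" unfolding Delta'_def by blast
  then have h: "0 \<in> Delta' (T ^^ 1)" by (simp add: msub_def)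
  have k1: "1 \<in> {1..n}" using n by simp
  show ?thesis unfolding Delta'_n_def by (rule UN_I[where B="\<lambda>k. Delta' (T ^^ k)", OF k1 h])
qed

context fixes r \<pi> l assumes iet: "is_iet_data r \<pi> l"
begin

lemma cnt_dev:
  assumes "x \<in> {0..<1}" "j \<in> {1..r}" "k \<ge> 1"
  shows "\<bar>real (cnt r \<pi> l j x k) - real k * l j\<bar> \<le> 2 * real k * discr (iet r \<pi> l) k"
proof -
  have j1: "j \<ge> 1" "j \<le> r" using assms by auto
  have c0: "0 \<le> iet_s l (j - 1)" using s_mono[OF iet, of 0 "j - 1"] s_0[OF iet] j1 by simp
  have cd: "iet_s l (j - 1) \<le> iet_s l j" using s_mono[OF iet, of "j - 1" j] j1 by simp
  have d1: "iet_s l j \<le> 1" using s_mono[OF iet, of j r] s_r[OF iet] j1 by simp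
  have dc: "iet_s l j - iet_s l (j - 1) = l j" using s_minus[OF iet] j1 by simp
  have "\<bar>(\<Sum>m<k. indicator {iet_s l (j - 1)..<iet_s l j} ((iet r \<pi> l ^^ m) x)) - real k * (iet_s l j - iet_s l (j - 1))\<bar>
     \<le> 2 * real k * discr (iet r \<pi> l) k"
    using assms c0 cd d1 by (intro cnt_two iet_in[OF iet]) auto
  then show ?thesis using cnt_ind[OF iet assms(1,2)] dc by simp
qed

definition gmap :: "(nat \<Rightarrow> int) \<Rightarrow> real" where
  "gmap m = frac (\<Sum>j\<in>{1..<r}. of_int (m j) * (tr r \<pi> l j - tr r \<pi> l r))"

lemma Delta'_sub:
  assumes B: "\<And>k. k \<in> {1..n} \<Longrightarrow> 4 * real k * discr (iet r \<pi> l) k \<le> real_of_int B"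
  shows "Delta'_n (iet r \<pi> l) n \<subseteq> gmap ` (PiE {1..<r} (\<lambda>_. {-B..B}))"
proof
  fix z assume "z \<in> Delta'_n (iet r \<pi> l) n"
  then obtain k where k: "k \<in> {1..n}" "z \<in> Delta' (iet r \<pi> l ^^ k)" unfolding Delta'_n_def by auto
  let ?T = "iet r \<pi> l ^^ k"
  obtain x y where xy: "x \<in> {0..<1}" "y \<in> {0..<1}" "z = (?T x \<ominus> x) \<ominus> (?T y \<ominus> y)"
    using k(2) unfolding Delta'_def Delta_def by blast
  define m where "m j = int (cnt r \<pi> l j x k) - int (cnt r \<pi> l j y k)" for j
  have z: "z = frac ((?T x - x) - (?T y - y))" unfolding xy(3) msub_def by (rule frac_frac_diff)
  have "(?T x - x) - (?T y - y) = (\<Sum>j\<in>{1..r}. of_int (m j) * tr r \<pi> l j)"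
    unfolding iet_pow_cnt[OF iet xy(1)] iet_pow_cnt[OF iet xy(2)] m_def
    by (simp add: sum_subtractf algebra_simps)
  also have "\<dots> = (\<Sum>j\<in>{1..<r}. of_int (m j) * (tr r \<pi> l j - tr r \<pi> l r))"
  proof -
    have r1: "r \<ge> 1" by (rule r_ge1[OF iet])
    have split: "{1..r} = insert r {1..<r}" using r1 by auto
    have "(\<Sum>j\<in>{1..r}. m j) = 0"
      using cnt_sum[OF iet xy(1), of k] cnt_sum[OF iet xy(2), of k]
      by (simp add: m_def sum_subtractf flip: of_nat_sum)
    then have mr: "of_int (m r) = - (\<Sum>j\<in>{1..<r}. of_int (m j) :: real)"
      unfolding split by (subst (asm) sum.insert) (auto simp flip: of_int_sum)
    show ?thesis unfolding split
      by (subst sum.insert) (auto simp: mr sum_distrib_right sum_distrib_left sum_subtractf algebra_simps)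
  qed
  finally have eq: "(?T x - x) - (?T y - y) = (\<Sum>j\<in>{1..<r}. of_int (m j) * (tr r \<pi> l j - tr r \<pi> l r))" .
  have zz: "z = gmap m" unfolding z gmap_def eq ..
  have "gmap (restrict m {1..<r}) = gmap m" unfolding gmap_def by (intro arg_cong[where f=frac] sum.cong) auto
  moreover have "restrict m {1..<r} \<in> PiE {1..<r} (\<lambda>_. {-B..B})"
  proof (rule restrict_PiE_iff[THEN iffD2], intro ballI)
    fix j assume j: "j \<in> {1..<r}"
    have k1: "k \<ge> 1" using k by auto
    have "\<bar>real (cnt r \<pi> l j x k) - real k * l j\<bar> \<le> 2 * real k * discr (iet r \<pi> l) k"
      using j k1 xy by (intro cnt_dev) auto
    moreover have "\<bar>real (cnt r \<pi> l j y k) - real k * l j\<bar> \<le> 2 * real k * discr (iet r \<pi> l) k"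
      using j k1 xy by (intro cnt_dev) auto
    ultimately have "\<bar>real_of_int (m j)\<bar> \<le> 4 * real k * discr (iet r \<pi> l) k"
      unfolding m_def by (auto simp: abs_le_iff)
    also have "\<dots> \<le> real_of_int B" using B k by auto
    finally have "\<bar>m j\<bar> \<le> B" by linarith
    then show "m j \<in> {-B..B}" by auto
  qed
  ultimately show "z \<in> gmap ` (PiE {1..<r} (\<lambda>_. {-B..B}))" using zz by (metis image_eqI)
qed

lemma card_bound:
  assumes B: "\<And>k. k \<in> {1..n} \<Longrightarrow> 4 * real k * discr (iet r \<pi> l) k \<le> real_of_int B"
  shows "finite (Delta'_n (iet r \<pi> l) n) \<and> card (Delta'_n (iet r \<pi> l) n) \<le> nat (2*B+1) ^ (r - 1)"
proof -
  have fin: "finite (PiE {1..<r} (\<lambda>_. {-B..B}))" by (intro finite_PiE) auto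
  have "card (gmap ` (PiE {1..<r} (\<lambda>_. {-B..B}))) \<le> card (PiE {1..<r} (\<lambda>_. {-B..B}))"
    by (rule card_image_le[OF fin])
  also have "\<dots> = nat (2*B+1) ^ (r - 1)" by (simp add: card_PiE)
  finally show ?thesis using Delta'_sub[OF B] fin
    by (meson card_mono finite_imageI finite_subset le_trans)
qed

end


context fixes r \<pi> l assumes iet: "is_iet_data r \<pi> l"
begin

definition Bn :: "nat \<Rightarrow> int" where
  "Bn n = \<lceil>\<Sum>k\<in>{1..n}. 4 * real k * discr (iet r \<pi> l) k\<rceil>"

lemma Bn_ok: "k \<in> {1..n} \<Longrightarrow> 4 * real k * discr (iet r \<pi> l) k \<le> real_of_int (Bn n)"
proof -
  assume k: "k \<in> {1..n}"
  have "4 * real k * discr (iet r \<pi> l) k \<le> (\<Sum>k\<in>{1..n}. 4 * real k * discr (iet r \<pi> l) k)"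
    using k by (intro member_le_sum) (auto intro!: mult_nonneg_nonneg discr_nonneg)
  also have "\<dots> \<le> real_of_int (Bn n)" unfolding Bn_def by linarith
  finally show ?thesis .
qed

lemma Delta'_n_finite: "finite (Delta'_n (iet r \<pi> l) n)"
proof -
  have "\<And>k. k \<in> {1..n} \<Longrightarrow> 4 * real k * discr (iet r \<pi> l) k \<le> real_of_int (Bn n)" by (rule Bn_ok)
  then show ?thesis using card_bound[OF iet, of n "Bn n"] by blast
qed

lemma card_ge1: "n \<ge> 1 \<Longrightarrow> card (Delta'_n (iet r \<pi> l) n) \<ge> 1"
  using Delta'_n_zero[of n "iet r \<pi> l"] Delta'_n_finite[of n]
  by (metis One_nat_def Suc_leI card_gt_0_iff empty_iff)

lemma ratio_nonneg: "n \<ge> 2 \<Longrightarrow> ln (real (card (Delta'_n (iet r \<pi> l) n))) / ln (real n) \<ge> 0"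
  using card_ge1[of n] by (intro divide_nonneg_nonneg) auto

lemma tau_nonneg: "tau (iet r \<pi> l) \<ge> 0"
proof -
  have "eventually (\<lambda>n. ereal 0 \<le> ereal (ln (real (card (Delta'_n (iet r \<pi> l) n))) / ln (real n))) sequentially"
    using ratio_nonneg unfolding eventually_sequentially by (intro exI[of _ 2]) auto
  then have "ereal 0 \<le> liminf (\<lambda>n. ereal (ln (real (card (Delta'_n (iet r \<pi> l) n))) / ln (real n)))"
    by (rule Liminf_bounded)
  also have "\<dots> \<le> tau (iet r \<pi> l)" unfolding tau_def by (rule Liminf_le_Limsup) simp
  finally show ?thesis by (simp add: zero_ereal_def)
qed

lemma tau_r1: assumes "r = 1" shows "tau (iet r \<pi> l) \<le> 0"
proof -
  have "eventually (\<lambda>n. ereal (ln (real (card (Delta'_n (iet r \<pi> l) n))) / ln (real n)) \<le> ereal 0) sequentially"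
  proof (rule always_eventually, rule allI)
    fix n
    have "\<And>k. k \<in> {1..n} \<Longrightarrow> 4 * real k * discr (iet r \<pi> l) k \<le> real_of_int (Bn n)" by (rule Bn_ok)
    then have "card (Delta'_n (iet r \<pi> l) n) \<le> nat (2 * Bn n + 1) ^ (r - 1)" using card_bound[OF iet, of n "Bn n"] by blast
    then have "card (Delta'_n (iet r \<pi> l) n) \<le> 1" using assms by simp
    then have "card (Delta'_n (iet r \<pi> l) n) = 0 \<or> card (Delta'_n (iet r \<pi> l) n) = 1" by linarith
    then show "ereal (ln (real (card (Delta'_n (iet r \<pi> l) n))) / ln (real n)) \<le> ereal 0" by auto
  qed
  then show ?thesis unfolding tau_def using Limsup_bounded by (metis zero_ereal_def)
qed

end

lemma omega_nonneg: "omega T \<ge> 0"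
proof -
  have "eventually (\<lambda>n. ereal 0 \<le> ereal (ln (real n * discr T n) / ln (real n))) sequentially"
    unfolding eventually_sequentially
  proof (intro exI[of _ 2] allI impI)
    fix n :: nat assume n: "n \<ge> 2"
    have "discr T n \<ge> 1 / real n" using n by (intro discr_ge_inv) auto
    then have "real n * discr T n \<ge> 1" using n by (simp add: field_simps)
    then show "ereal 0 \<le> ereal (ln (real n * discr T n) / ln (real n))" using n by auto
  qed
  then have "ereal 0 \<le> liminf (\<lambda>n. ereal (ln (real n * discr T n) / ln (real n)))"
    by (rule Liminf_bounded)
  also have "\<dots> \<le> omega T" unfolding omega_def by (rule Liminf_le_Limsup) simp
  finally show ?thesis by (simp add: zero_ereal_def)
qed



context fixes r \<pi> l assumes iet: "is_iet_data r \<pi> l"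
begin

lemma tau_upper_beta:
  assumes bpos: "\<beta> > 0" and om: "omega (iet r \<pi> l) < ereal \<beta>"
  shows "tau (iet r \<pi> l) \<le> ereal (real (r - 1) * \<beta>)"
proof -
  define T where "T = iet r \<pi> l"
  define D where "D k = discr T k" for k
  have "eventually (\<lambda>n. ereal (ln (real n * discr T n) / ln (real n)) < ereal \<beta>) sequentially"
    using Limsup_lessD[OF om[unfolded omega_def]] unfolding T_def .
  then obtain N where N: "\<And>n. n \<ge> N \<Longrightarrow> ln (real n * D n) / ln (real n) < \<beta>"
    unfolding eventually_sequentially D_def by auto
  define M where "M = max N 2"
  have step2: "real n * D n \<le> real n powr \<beta>" if n: "n \<ge> M" for n
  proof -
    have n2: "n \<ge> 2" "n \<ge> N" using n by (auto simp: M_def)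
    have lnpos: "ln (real n) > 0" using n2 by simp
    have lt: "ln (real n * D n) < \<beta> * ln (real n)"
      using N[OF n2(2)] lnpos by (simp add: field_simps)
    show ?thesis
    proof (cases "real n * D n \<le> 1")
      case True
      have "1 \<le> real n powr \<beta>" using n2 bpos by (intro ge_one_powr_ge_zero) auto
      then show ?thesis using True by linarith
    next
      case False
      then have pos: "real n * D n > 0" by simp
      have "real n * D n = exp (ln (real n * D n))" using pos by simp
      also have "\<dots> < exp (\<beta> * ln (real n))" using lt by simp
      also have "\<dots> = real n powr \<beta>" using n2 by (simp add: powr_def)
      finally show ?thesis by simp
    qed
  qed
  define K where "K = (\<Sum>k<M. real k * D k)"
  have Dnn: "\<And>k. D k \<ge> 0" unfolding D_def by (rule discr_nonneg)
  have K0: "K \<ge> 0" unfolding K_def using Dnn by (intro sum_nonneg) auto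
  have step3: "real k * D k \<le> K + real n powr \<beta>" if k: "1 \<le> k" "k \<le> n" for k n
  proof (cases "k < M")
    case True
    have "real k * D k \<le> K" unfolding K_def using True Dnn by (intro member_le_sum) auto
    moreover have "real n powr \<beta> \<ge> 0" by simp
    ultimately show ?thesis by linarith
  next
    case False
    have "real k * D k \<le> real k powr \<beta>" using False by (intro step2) auto
    also have "\<dots> \<le> real n powr \<beta>" using k bpos by (intro powr_mono2) auto
    finally show ?thesis using K0 by linarith
  qed
  define C where "C = 8 * K + 11"
  have Cpos: "C \<ge> 11" using K0 by (simp add: C_def)
  have step5: "ln (real (card (Delta'_n T n))) / ln (real n) \<le> real (r - 1) * \<beta> + real (r - 1) * ln C / ln (real n)"
    if n: "n \<ge> 2" for n
  proof -
    define B where "B = \<lceil>4 * (K + real n powr \<beta>)\<rceil>"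
    have hB: "4 * real k * discr (iet r \<pi> l) k \<le> real_of_int B" if "k \<in> {1..n}" for k
    proof -
      have "4 * real k * discr (iet r \<pi> l) k = 4 * (real k * D k)" by (simp add: D_def T_def)
      also have "\<dots> \<le> 4 * (K + real n powr \<beta>)" using step3[of k n] that by auto
      also have "\<dots> \<le> real_of_int B" unfolding B_def by linarith
      finally show ?thesis .
    qed
    have cb: "card (Delta'_n T n) \<le> nat (2*B+1) ^ (r - 1)" using card_bound[OF iet hB] by (simp add: T_def)
    have np: "real n powr \<beta> \<ge> 1" using n bpos by (intro ge_one_powr_ge_zero) auto
    have B0: "B \<ge> 0" unfolding B_def using K0 np by simp
    have "real (nat (2*B+1)) = 2 * real_of_int B + 1" using B0 by simp
    also have "\<dots> \<le> 8 * (K + real n powr \<beta>) + 3" unfolding B_def by linarith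
    also have "\<dots> \<le> C * real n powr \<beta>"
    proof -
      have kk: "K \<le> K * real n powr \<beta>" using np K0 by (metis mult_left_mono mult.right_neutral)
      have "C * real n powr \<beta> = 8 * (K * real n powr \<beta>) + 11 * real n powr \<beta>" by (simp add: C_def algebra_simps)
      moreover have "8 * (K + real n powr \<beta>) + 3 = 8 * K + 8 * real n powr \<beta> + 3" by (simp add: algebra_simps)
      ultimately show ?thesis using kk np by (smt (verit))
    qed
    finally have b1: "real (nat (2*B+1)) \<le> C * real n powr \<beta>" .
    have "real (card (Delta'_n T n)) \<le> real (nat (2*B+1)) ^ (r - 1)"
      using cb by (metis of_nat_le_iff of_nat_power)
    also have "\<dots> \<le> (C * real n powr \<beta>) ^ (r - 1)" using b1 by (intro power_mono) auto
    finally have c1: "real (card (Delta'_n T n)) \<le> (C * real n powr \<beta>) ^ (r - 1)" .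
    have cg1: "card (Delta'_n T n) \<ge> 1" using card_ge1[OF iet, of n] n by (simp add: T_def)
    have "ln (real (card (Delta'_n T n))) \<le> ln ((C * real n powr \<beta>) ^ (r - 1))"
      using c1 cg1 Cpos np by (subst ln_le_cancel_iff) auto
    also have "\<dots> = real (r - 1) * (ln C + \<beta> * ln (real n))"
      using Cpos n by (simp add: ln_realpow ln_mult)
    finally have "ln (real (card (Delta'_n T n))) \<le> real (r - 1) * (ln C + \<beta> * ln (real n))" .
    moreover have lnpos: "ln (real n) > 0" using n by simp
    ultimately show ?thesis by (simp add: field_simps)
  qed
  show ?thesis
  proof (rule ereal_le_epsilon2)
    fix e :: real assume e: "e > 0"
    define A where "A = real (r - 1) * ln C"
    have A0: "A \<ge> 0" unfolding A_def using Cpos by simp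
    define N1 where "N1 = nat \<lceil>exp (A / e)\<rceil> + 2"
    have ev: "eventually (\<lambda>n. ereal (ln (real (card (Delta'_n T n))) / ln (real n)) \<le> ereal (real (r - 1) * \<beta> + e)) sequentially"
      unfolding eventually_sequentially
    proof (intro exI[of _ N1] allI impI)
      fix n assume n: "n \<ge> N1"
      have n2: "n \<ge> 2" using n by (simp add: N1_def)
      have lnpos: "ln (real n) > 0" using n2 by simp
      have "exp (A / e) \<le> real n" using n unfolding N1_def by linarith
      then have "A / e \<le> ln (real n)" using n2 by (subst ln_ge_iff) auto
      then have "A \<le> e * ln (real n)" using e by (simp add: field_simps)
      then have "A / ln (real n) \<le> e" using lnpos by (simp add: field_simps)
      then show "ereal (ln (real (card (Delta'_n T n))) / ln (real n)) \<le> ereal (real (r - 1) * \<beta> + e)"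
        using step5[OF n2] unfolding A_def by simp
    qed
    have "tau (iet r \<pi> l) \<le> ereal (real (r - 1) * \<beta> + e)"
      unfolding tau_def T_def[symmetric] by (rule Limsup_bounded[OF ev])
    then show "tau (iet r \<pi> l) \<le> ereal (real (r - 1) * \<beta>) + ereal e" by simp
  qed
qed

lemma tau_le_omega: "tau (iet r \<pi> l) \<le> ereal (real r - 1) * omega (iet r \<pi> l)"
proof (cases "r = 1")
  case True
  then show ?thesis using tau_r1[OF iet True] by (simp add: zero_ereal_def[symmetric])
next
  case False
  then have r2: "r \<ge> 2" using r_ge1[OF iet] by linarith
  have rr: "real r - 1 = real (r - 1)" using r2 by simp
  have rp: "real (r - 1) > 0" using r2 by simp
  have om0: "omega (iet r \<pi> l) \<ge> 0" by (rule omega_nonneg)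
  show ?thesis
  proof (cases "omega (iet r \<pi> l)")
    case (real w)
    have w0: "w \<ge> 0" using om0 real by (simp add: zero_ereal_def)
    have "tau (iet r \<pi> l) \<le> ereal (real (r - 1) * w)"
    proof (rule ereal_le_epsilon2)
      fix e :: real assume e: "e > 0"
      define \<beta> where "\<beta> = w + e / real (r - 1)"
      have ep: "e / real (r - 1) > 0" using e rp by simp
      have bp: "\<beta> > 0" unfolding \<beta>_def by (rule add_nonneg_pos[OF w0 ep])
      have "w < \<beta>" unfolding \<beta>_def using ep by (simp only: less_add_same_cancel1)
      then have "omega (iet r \<pi> l) < ereal \<beta>" using real by simp
      then have "tau (iet r \<pi> l) \<le> ereal (real (r - 1) * \<beta>)" by (rule tau_upper_beta[OF bp])
      also have "real (r - 1) * \<beta> = real (r - 1) * w + e" using rp by (simp add: \<beta>_def field_simps)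
      finally show "tau (iet r \<pi> l) \<le> ereal (real (r - 1) * w) + ereal e" by simp
    qed
    then show ?thesis by (simp only: real rr times_ereal.simps(1))
  next
    case PInf
    have "real r - 1 > 0" using r2 by simp
    then show ?thesis using PInf by simp
  next
    case MInf
    then show ?thesis using om0 by simp
  qed
qed

end


abbreviation PP :: "(real \<times> real) measure" where "PP \<equiv> unit_leb \<Otimes>\<^sub>M unit_leb"

lemma space_unit_leb: "space unit_leb = {0..<1}" unfolding unit_leb_def by simp

lemma prob_unit_leb: "prob_space unit_leb"
proof (rule prob_spaceI)
  have "emeasure (restrict_space lborel {0..<1::real}) {0..<1} = emeasure lborel {0..<1::real}"
    by (rule emeasure_restrict_space) auto
  then show "emeasure unit_leb (space unit_leb) = 1" by (simp add: space_unit_leb unit_leb_def)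
qed

lemma prob_PP: "prob_space PP" by (rule prob_space_pair[OF prob_unit_leb prob_unit_leb])

lemma space_PP: "space PP = {0..<1} \<times> {0..<1}" by (simp add: space_pair_measure space_unit_leb)

lemma dnint_meas[measurable]: "dnint \<in> borel_measurable borel"
  unfolding dnint_def[abs_def] round_def by measurable

lemma unit_leb_borel[measurable]: "(\<lambda>x. x) \<in> borel_measurable unit_leb"
  unfolding unit_leb_def by (intro measurable_restrict_space1 measurable_ident_sets) simp

lemma fst_PP[measurable]: "(\<lambda>p. fst p) \<in> borel_measurable PP"
  using measurable_compose[OF measurable_fst unit_leb_borel] by simp
lemma snd_PP[measurable]: "(\<lambda>p. snd p) \<in> borel_measurable PP"
  using measurable_compose[OF measurable_snd unit_leb_borel] by simp

lemma f_PP[measurable]: "(\<lambda>p. dnint (fst p - snd p + \<delta>)) \<in> borel_measurable PP"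
  by measurable

lemma H_sets: "{p \<in> space PP. dnint (fst p - snd p + \<delta>) < c} \<in> sets PP"
  by measurable

lemma unit_leb_le_lborel:
  assumes "A \<in> sets unit_leb" shows "emeasure unit_leb A = emeasure lborel A"
proof -
  have "A \<subseteq> {0..<1}" using sets.sets_into_space[OF assms] by (simp add: space_unit_leb)
  then show ?thesis unfolding unit_leb_def by (intro emeasure_restrict_space) auto
qed

lemma H_measure:
  assumes d: "\<delta> \<in> {0..<1}" and c: "c > 0" "c \<le> 1"
  shows "emeasure PP {p \<in> space PP. dnint (fst p - snd p + \<delta>) < c} \<le> ennreal (8 * c)"
proof -
  let ?H = "{p \<in> space PP. dnint (fst p - snd p + \<delta>) < c}"
  interpret U: prob_space unit_leb by (rule prob_unit_leb)
  have "emeasure PP ?H = (\<integral>\<^sup>+x. emeasure unit_leb (Pair x -` ?H) \<partial>unit_leb)"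
    by (rule U.emeasure_pair_measure_alt[OF H_sets])
  also have "\<dots> \<le> (\<integral>\<^sup>+x. ennreal (8 * c) \<partial>unit_leb)"
  proof (rule nn_integral_mono)
    fix x assume x: "x \<in> space unit_leb"
    define I where "I m = {x + \<delta> - real_of_int m - c <..< x + \<delta> - real_of_int m + c}" for m :: int
    have sub: "Pair x -` ?H \<subseteq> I (-1) \<union> I 0 \<union> I 1 \<union> I 2"
    proof
      fix y assume "y \<in> Pair x -` ?H"
      then have y: "y \<in> {0..<1}" "dnint (x - y + \<delta>) < c" using x by (auto simp: space_PP space_unit_leb)
      define z where "z = x - y + \<delta>"
      define m where "m = round z"
      have zm: "\<bar>z - of_int m\<bar> < c" using y(2) unfolding dnint_def z_def m_def by simp
      have zr: "-1 < z" "z < 2" using x y d by (auto simp: z_def space_unit_leb)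
      have "-2 < m" "m < 3" using zm zr c by linarith+
      then have "m = -1 \<or> m = 0 \<or> m = 1 \<or> m = 2" by linarith
      moreover have "y \<in> I m" using zm unfolding I_def z_def by (auto simp: abs_less_iff)
      ultimately show "y \<in> I (-1) \<union> I 0 \<union> I 1 \<union> I 2" by auto
    qed
    have Is: "\<And>m. I m \<in> sets lborel" unfolding I_def by simp
    have Im: "\<And>m. emeasure lborel (I m) = ennreal (2 * c)" unfolding I_def using c by simp
    have ms: "Pair x -` ?H \<in> sets unit_leb"
      using sets_Pair1[OF H_sets] by simp
    have "emeasure unit_leb (Pair x -` ?H) = emeasure lborel (Pair x -` ?H)"
      by (rule unit_leb_le_lborel[OF ms])
    also have "\<dots> \<le> emeasure lborel (I (-1) \<union> I 0 \<union> I 1 \<union> I 2)"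
      using sub Is by (intro emeasure_mono) auto
    also have "\<dots> \<le> emeasure lborel (I (-1) \<union> I 0 \<union> I 1) + emeasure lborel (I 2)"
      using Is by (intro emeasure_subadditive) auto
    also have "\<dots> \<le> emeasure lborel (I (-1) \<union> I 0) + emeasure lborel (I 1) + emeasure lborel (I 2)"
      using Is by (intro add_right_mono emeasure_subadditive) auto
    also have "\<dots> \<le> emeasure lborel (I (-1)) + emeasure lborel (I 0) + emeasure lborel (I 1) + emeasure lborel (I 2)"
      using Is by (intro add_right_mono emeasure_subadditive) auto
    also have "\<dots> = ennreal (2*c) + ennreal (2*c) + ennreal (2*c) + ennreal (2*c)" by (simp add: Im)
    also have "\<dots> = ennreal (8 * c)" using c by (simp flip: ennreal_plus)
    finally show "emeasure unit_leb (Pair x -` ?H) \<le> ennreal (8 * c)" .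
  qed
  also have "\<dots> = ennreal (8 * c)" using U.emeasure_space_1 by simp
  finally show ?thesis .
qed

lemma Delta'_n_range: "\<delta> \<in> Delta'_n T n \<Longrightarrow> \<delta> \<in> {0..<1}"
  unfolding Delta'_n_def Delta'_def msub_def by (auto simp: frac_lt_1)



lemma pow2_powr: "real ((2::nat) ^ k) powr b = (2::real) powr (real k * b)"
proof -
  have "real ((2::nat) ^ k) = (2::real) powr real k" by (simp add: powr_realpow)
  then show ?thesis by (simp add: powr_powr)
qed

lemma not_AE:
  fixes T :: "real \<Rightarrow> real"
  assumes fin: "\<And>n. finite (Delta'_n T n)" and t0: "tau T \<ge> 0" and tl: "tau T < ereal \<alpha>"
    and ae: "AE p in PP. liminf (\<lambda>n. ereal (real n powr \<alpha> * dnint ((T ^^ n) (fst p) - (T ^^ n) (snd p)))) = 0"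
  shows False
proof -
  interpret P: prob_space PP by (rule prob_PP)
  obtain b where b: "tau T < b" "b < ereal \<alpha>" using tl dense by blast
  then obtain \<beta> where bb: "b = ereal \<beta>" using t0 by (cases b) auto
  have "0 < b" using t0 b(1) by (rule le_less_trans)
  then have bpos: "\<beta> > 0" using bb by simp
  have ba: "\<beta> < \<alpha>" using b(2) bb by simp
  have "eventually (\<lambda>n. ereal (ln (real (card (Delta'_n T n))) / ln (real n)) < ereal \<beta>) sequentially"
    using b(1) bb unfolding tau_def by (intro Limsup_lessD) simp
  then obtain N0 where N0: "\<And>n. n \<ge> N0 \<Longrightarrow> ln (real (card (Delta'_n T n))) / ln (real n) < \<beta>"
    unfolding eventually_sequentially by auto
  define M where "M = max N0 2"
  have cardb: "real (card (Delta'_n T n)) \<le> real n powr \<beta>" if n: "n \<ge> M" for n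
  proof (cases "card (Delta'_n T n) = 0")
    case True then show ?thesis by simp
  next
    case False
    have n2: "n \<ge> 2" "n \<ge> N0" using n by (auto simp: M_def)
    have lnpos: "ln (real n) > 0" using n2 by simp
    have lt: "ln (real (card (Delta'_n T n))) < \<beta> * ln (real n)"
      using N0[OF n2(2)] lnpos by (simp add: field_simps)
    have "real (card (Delta'_n T n)) = exp (ln (real (card (Delta'_n T n))))" using False by simp
    also have "\<dots> < exp (\<beta> * ln (real n))" using lt by simp
    also have "\<dots> = real n powr \<beta>" using n2 by (simp add: powr_def)
    finally show ?thesis by simp
  qed
  define t where "t j = (2::real) powr (- (\<alpha> * real j))" for j
  have tpos: "t j > 0" for j unfolding t_def by simp
  have tnn: "t j \<ge> 0" for j using tpos[of j] by simp
  have apos: "\<alpha> > 0" using bpos ba by simp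
  have tle: "t j \<le> 1" for j
  proof -
    have "(2::real) powr (- (\<alpha> * real j)) \<le> 2 powr 0" using apos by (intro powr_mono) auto
    then show ?thesis unfolding t_def by simp
  qed
  define H where "H j \<delta> = {p \<in> space PP. dnint (fst p - snd p + \<delta>) < t j}" for j \<delta>
  define G where "G j = (\<Union>\<delta>\<in>Delta'_n T (2 ^ Suc j). H j \<delta>)" for j
  have Hs: "H j \<delta> \<in> sets PP" for j \<delta> unfolding H_def by (rule H_sets)
  have Gs: "G j \<in> sets PP" for j unfolding G_def using fin Hs by (intro sets.finite_UN) auto
  have Gm: "measure PP (G j) \<le> real (card (Delta'_n T (2 ^ Suc j))) * (8 * t j)" for j
  proof -
    have "emeasure PP (G j) \<le> (\<Sum>\<delta>\<in>Delta'_n T (2 ^ Suc j). emeasure PP (H j \<delta>))"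
      unfolding G_def using fin Hs by (intro emeasure_subadditive_finite) auto
    also have "\<dots> \<le> (\<Sum>\<delta>\<in>Delta'_n T (2 ^ Suc j). ennreal (8 * t j))"
      unfolding H_def using tpos tle by (intro sum_mono H_measure Delta'_n_range) auto
    also have "\<dots> = ennreal (real (card (Delta'_n T (2 ^ Suc j))) * (8 * t j))"
    proof -
      have t0: "0 \<le> 8 * t j" using tpos[of j] by simp
      show ?thesis using t0 by (simp add: ennreal_of_nat_eq_real_of_nat ennreal_mult[symmetric])
    qed
    finally have h: "emeasure PP (G j) \<le> ennreal (real (card (Delta'_n T (2 ^ Suc j))) * (8 * t j))" .
    have nn: "0 \<le> real (card (Delta'_n T (2 ^ Suc j))) * (8 * t j)" using tpos[of j] by simp
    show ?thesis using h nn by (simp add: P.emeasure_eq_measure)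
  qed
  define q where "q = (2::real) powr (\<beta> - \<alpha>)"
  have q: "q < 1" "q \<ge> 0" unfolding q_def using ba by (auto intro: powr_less_one)
  have summ: "summable (\<lambda>j. measure PP (G j))"
  proof (rule summable_comparison_test_ev)
    show "summable (\<lambda>j. (8 * 2 powr \<beta>) * q ^ j)" using q by (intro summable_mult summable_geometric) auto
    show "eventually (\<lambda>j. norm (measure PP (G j)) \<le> (8 * 2 powr \<beta>) * q ^ j) sequentially"
      unfolding eventually_sequentially
    proof (intro exI[of _ M] allI impI)
      fix j assume j: "j \<ge> M"
      have "Suc j \<le> 2 ^ Suc j" by (rule less_imp_le[OF less_exp])
      then have jM: "2 ^ Suc j \<ge> M" using j by linarith
      have "norm (measure PP (G j)) = measure PP (G j)" by simp
      also have "\<dots> \<le> real (card (Delta'_n T (2 ^ Suc j))) * (8 * t j)" by (rule Gm)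
      also have "\<dots> \<le> real (2 ^ Suc j) powr \<beta> * (8 * t j)"
        using cardb[OF jM] tnn[of j] by (intro mult_right_mono) auto
      also have "\<dots> = 8 * (2 powr (real (Suc j) * \<beta>) * 2 powr (- (\<alpha> * real j)))"
        unfolding pow2_powr t_def by simp
      also have "\<dots> = 8 * 2 powr (\<beta> + (\<beta> - \<alpha>) * real j)"
        by (simp add: powr_add[symmetric] algebra_simps)
      also have "\<dots> = (8 * 2 powr \<beta>) * q ^ j"
        unfolding q_def by (simp add: powr_add powr_realpow[symmetric] powr_powr mult.commute)
      finally show "norm (measure PP (G j)) \<le> (8 * 2 powr \<beta>) * q ^ j" .
    qed
  qed
  have BC: "AE p in PP. eventually (\<lambda>j. p \<in> space PP - G j) sequentially"
    using Gs summ by (intro borel_cantelli_AE1) (auto simp: P.emeasure_eq_measure)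
  have "AE p in PP. liminf (\<lambda>n. ereal (real n powr \<alpha> * dnint ((T ^^ n) (fst p) - (T ^^ n) (snd p)))) \<noteq> 0"
    using BC
  proof (eventually_elim)
    case (elim p)
    then obtain J where J: "\<And>j. j \<ge> J \<Longrightarrow> p \<in> space PP - G j" unfolding eventually_sequentially by auto
    have pin: "p \<in> space PP" using J[of J] by simp
    then have xy: "fst p \<in> {0..<1}" "snd p \<in> {0..<1}" by (auto simp: space_PP)
    have ev: "eventually (\<lambda>n. ereal 1 \<le> ereal (real n powr \<alpha> * dnint ((T ^^ n) (fst p) - (T ^^ n) (snd p)))) sequentially"
      unfolding eventually_sequentially
    proof (intro exI[of _ "2 ^ J"] allI impI)
      fix n :: nat assume n: "n \<ge> 2 ^ J"
      have n1: "n \<ge> 1" using n by (metis le_trans one_le_power one_le_numeral)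
      obtain j where j: "2 ^ j \<le> n" "n < 2 ^ (j + 1)" using ex_power_ivl1[of 2 n] n1 by auto
      have jJ: "j \<ge> J"
      proof (rule ccontr)
        assume "\<not> j \<ge> J"
        then have "j + 1 \<le> J" by simp
        then have "(2::nat) ^ (j + 1) \<le> 2 ^ J" by (rule power_increasing) simp
        then show False using j n by linarith
      qed
      obtain \<delta> where d: "\<delta> \<in> Delta' (T ^^ n)" "dnint ((T ^^ n) (fst p) - (T ^^ n) (snd p)) = dnint (fst p - snd p + \<delta>)"
        using dnint_orbit[OF xy] by blast
      have "\<delta> \<in> Delta'_n T (2 ^ Suc j)" unfolding Delta'_n_def using d(1) n1 j(2) by auto
      moreover have "p \<notin> G j" using J[OF jJ] by simp
      ultimately have "\<not> dnint (fst p - snd p + \<delta>) < t j" using pin unfolding G_def H_def by blast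
      then have dge: "dnint ((T ^^ n) (fst p) - (T ^^ n) (snd p)) \<ge> t j" using d(2) by simp
      have "real ((2::nat) ^ j) powr \<alpha> \<le> real n powr \<alpha>"
        using j(1) apos by (intro powr_mono2) auto
      then have pge: "real n powr \<alpha> \<ge> 2 powr (real j * \<alpha>)" unfolding pow2_powr .
      have "1 = 2 powr (real j * \<alpha>) * t j" unfolding t_def by (simp add: powr_add[symmetric])
      also have "\<dots> \<le> real n powr \<alpha> * dnint ((T ^^ n) (fst p) - (T ^^ n) (snd p))"
        using pge dge tnn[of j] by (intro mult_mono) auto
      finally show "ereal 1 \<le> ereal (real n powr \<alpha> * dnint ((T ^^ n) (fst p) - (T ^^ n) (snd p)))" by simp
    qed
    have "ereal 1 \<le> liminf (\<lambda>n. ereal (real n powr \<alpha> * dnint ((T ^^ n) (fst p) - (T ^^ n) (snd p))))"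
      by (rule Liminf_bounded[OF ev])
    then show ?case by (auto simp: one_ereal_def)
  qed
  with ae have "AE p in PP. False" by eventually_elim simp
  then show False using P.AE_False by simp
qed



theorem theorem11p7:
  fixes r :: nat and \<pi> :: "nat \<Rightarrow> nat" and l :: "nat \<Rightarrow> real" and T :: "real \<Rightarrow> real"
  assumes "is_iet_data r \<pi> l"
    and "T = iet r \<pi> l"
  shows "C_psi T \<le> tau T \<and> tau T \<le> ereal (real r - 1) * omega T
     \<and> (omega T = 0 \<longrightarrow> tau T = 0 \<and> C_psi T = 0)"
proof -
  have iet: "is_iet_data r \<pi> l" by (rule assms(1))
  have tau0: "tau T \<ge> 0" unfolding assms(2) by (rule tau_nonneg[OF iet])
  have tle: "tau T \<le> ereal (real r - 1) * omega T" unfolding assms(2) by (rule tau_le_omega[OF iet])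
  have fin: "\<And>n. finite (Delta'_n T n)" unfolding assms(2) by (rule Delta'_n_finite[OF iet])
  have Cle: "C_psi T \<le> tau T"
    unfolding C_psi_def
  proof (rule Sup_least)
    fix e assume "e \<in> {0} \<union> {ereal \<alpha> |\<alpha>. 0 < \<alpha> \<and>
        (AE p in unit_leb \<Otimes>\<^sub>M unit_leb. liminf (\<lambda>n. ereal (real n powr \<alpha> * dnint ((T ^^ n) (fst p) - (T ^^ n) (snd p)))) = 0)}"
    then show "e \<le> tau T"
    proof
      assume "e \<in> {0}" then show ?thesis using tau0 by simp
    next
      assume "e \<in> {ereal \<alpha> |\<alpha>. 0 < \<alpha> \<and>
        (AE p in unit_leb \<Otimes>\<^sub>M unit_leb. liminf (\<lambda>n. ereal (real n powr \<alpha> * dnint ((T ^^ n) (fst p) - (T ^^ n) (snd p)))) = 0)}"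
      then obtain \<alpha> where a: "e = ereal \<alpha>"
        "AE p in unit_leb \<Otimes>\<^sub>M unit_leb. liminf (\<lambda>n. ereal (real n powr \<alpha> * dnint ((T ^^ n) (fst p) - (T ^^ n) (snd p)))) = 0"
        by blast
      show ?thesis
      proof (rule ccontr)
        assume "\<not> e \<le> tau T"
        then have "tau T < ereal \<alpha>" using a(1) by simp
        then show False using not_AE[OF fin tau0 _ a(2)] by blast
      qed
    qed
  qed
  have C0: "C_psi T \<ge> 0" unfolding C_psi_def by (rule Sup_upper) simp
  have last: "omega T = 0 \<longrightarrow> tau T = 0 \<and> C_psi T = 0"
  proof
    assume "omega T = 0"
    then have "tau T \<le> 0" using tle by simp
    then have t: "tau T = 0" using tau0 by simp
    then show "tau T = 0 \<and> C_psi T = 0" using Cle C0 by simp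
  qed
  show ?thesis using Cle tle last by blast
qed


end
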